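(* Let $\mathbf{B}=\mathbf{B}_+\,\dot\cup\,\mathbf{B}'\in\dot{\mathbb{P}}(\mathbb{L}(\mathbf{C}))$ with $|\mathbf{B}|=|\mathbf{C}|$. Suppose every $L\in\mathbf{B}_+$ has a positive monotonic effect on $D$ relative to $\mathbf{C}$, and $\mathbf{W}$ suffices to adjust for confounding of $\mathbf{C}$ on $D$. If for some tree $\mathfrak{T}$ on $\mathbf{B}_+$ and some $\mathbf{w}$ (all conditioning events having positive probability) $$E[D\mid\mathbf{B}=\mathbf{1},\mathbf{W}=\mathbf{w}]-\sum_{L\in\mathbf{B}_+}E[D\mid\mathbf{B}\setminus\{L\}=\mathbf{1},L=0,\mathbf{W}=\mathbf{w}]-\sum_{\varnothing\neq\widetilde{\mathbf{B}}\subseteq\mathbf{B}'}E[D\mid\mathbf{B}\setminus\widetilde{\mathbf{B}}=\mathbf{1},\widetilde{\mathbf{B}}=\mathbf{0},\mathbf{W}=\mathbf{w}]+\sum_{\mathbf{E}\in\mathfrak{T}}E[D\mid\mathbf{B}\setminus\mathbf{E}=\mathbf{1},\mathbf{E}=\mathbf{0},\mathbf{W}=\mathbf{w}]>0,$$ then $\mathbf{B}$ is singular for $\mathcal{D}(\mathbf{C},\Omega)$.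
   Context: $\Omega$ is a population with a probability distribution; events are binary random variables; $\overline{X}=1-X$; $\mathbb{L}(\mathbf{C})=\mathbf{C}\cup\{\overline{X}:X\in\mathbf{C}\}$; $\dot{\mathbb{P}}(\mathbb{L}(\mathbf{C}))$ is the set of subsets of $\mathbb{L}(\mathbf{C})$ not containing both $X$ and $\overline{X}$; $(L)_{\mathbf{c}}$ is the value of literal $L$ under assignment $\mathbf{c}$; $\bigwedge(\mathbf{B})=\min_{L\in\mathbf{B}}L$. Potential outcomes $D_{\mathbf{c}}(\omega)\in\{0,1\}$; consistency $D(\omega)=D_{\mathbf{C}(\omega)}(\omega)$. Conditioning on $\{\mathbf{B}\setminus\widetilde{\mathbf{B}}=\mathbf{1},\widetilde{\mathbf{B}}=\mathbf{0}\}$ means literals in $\widetilde{\mathbf{B}}$ equal 0 and the rest of $\mathbf{B}$ equal 1. $\mathbf{W}$ suffices to adjust for confounding of $\mathbf{C}$ on $D$ if $D_{\mathbf{c}}$ is independent of $\mathbf{C}$ given $\mathbf{W}=\mathbf{w}$ for all $\mathbf{c},\mathbf{w}$. A literal $L$ has a positive monotonic effect on $D$ relative to $\mathbf{C}$ if for all $\omega$ and assignments $\mathbf{c},\mathbf{c}'$ differing only in the variable underlying $L$ with $(L)_{\mathbf{c}}=1,(L)_{\mathbf{c}'}=0$, $D_{\mathbf{c}}(\omega)\ge D_{\mathbf{c}'}(\omega)$. A tree on a finite set $\mathbf{S}$ is a set $\mathfrak{T}$ of 2-element subsets with $|\mathfrak{T}|=|\mathbf{S}|-1$ connecting all elements (empty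 if $|\mathbf{S}|\le1$). $\mathbf{B}$ is a sufficient cause for $D$ relative to $\mathbf{C}$ for $\omega^*$ if some $\mathbf{c}^*$ has $(\bigwedge(\mathbf{B}))_{\mathbf{c}^*}=1$ and $D_{\mathbf{c}}(\omega^* )=1$ whenever $(\bigwedge(\mathbf{B}))_{\mathbf{c}}=1$; minimal if no proper subset is such; singular for $\omega^*$ if minimal and no other $\mathbf{B}'\in\dot{\mathbb{P}}(\mathbb{L}(\mathbf{C}))$ is a minimal sufficient cause for $\omega^*$; singular for $\mathcal{D}(\mathbf{C},\Omega)$ if singular for some $\omega^*\in\Omega$. *)

theory Defs
  imports "HOL-Probability.Probability"
begin

text \<open>Variables of C are indexed by a type 'v; each index x denotes a binary
random variable Cv x on the population. A literal is a pair (x, b): (x, True)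
is the event X, (x, False) is its complement 1 - X.\<close>

type_synonym 'v lit = "'v \<times> bool"

definition lits :: "'v set \<Rightarrow> 'v lit set" where
  "lits C = C \<times> UNIV"

definition dotP :: "'v set \<Rightarrow> 'v lit set set" where
  "dotP C = {B. B \<subseteq> lits C \<and> (\<forall>x. \<not> ((x, True) \<in> B \<and> (x, False) \<in> B))}"

definition assignments :: "'v set \<Rightarrow> ('v \<Rightarrow> bool) set" where
  "assignments C = {c. \<forall>v. v \<notin> C \<longrightarrow> \<not> c v}"

definition lit_val :: "'v lit \<Rightarrow> ('v \<Rightarrow> bool) \<Rightarrow> bool" where
  "lit_val L c = (c (fst L) = snd L)"

definition conj_val :: "'v lit set \<Rightarrow> ('v \<Rightarrow> bool) \<Rightarrow> bool" where
  "conj_val B c = (\<forall>L\<in>B. lit_val L c)"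

text \<open>Potential outcomes: Dpo c \<omega> is D_c(\<omega>).\<close>
definition sufficient_cause ::
  "'v set \<Rightarrow> (('v \<Rightarrow> bool) \<Rightarrow> 'o \<Rightarrow> bool) \<Rightarrow> 'v lit set \<Rightarrow> 'o \<Rightarrow> bool" where
  "sufficient_cause C Dpo B \<omega> =
     (B \<in> dotP C \<and> (\<exists>c\<in>assignments C. conj_val B c) \<and>
      (\<forall>c\<in>assignments C. conj_val B c \<longrightarrow> Dpo c \<omega>))"

definition minimal_sufficient_cause ::
  "'v set \<Rightarrow> (('v \<Rightarrow> bool) \<Rightarrow> 'o \<Rightarrow> bool) \<Rightarrow> 'v lit set \<Rightarrow> 'o \<Rightarrow> bool" where
  "minimal_sufficient_cause C Dpo B \<omega> =
     (sufficient_cause C Dpo B \<omega> \<and> (\<forall>B'. B' \<subset> B \<longrightarrow> \<not> sufficient_cause C Dpo B' \<omega>))"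

definition singular_cause_for ::
  "'v set \<Rightarrow> (('v \<Rightarrow> bool) \<Rightarrow> 'o \<Rightarrow> bool) \<Rightarrow> 'v lit set \<Rightarrow> 'o \<Rightarrow> bool" where
  "singular_cause_for C Dpo B \<omega> =
     (minimal_sufficient_cause C Dpo B \<omega> \<and>
      (\<forall>B'\<in>dotP C. B' \<noteq> B \<longrightarrow> \<not> minimal_sufficient_cause C Dpo B' \<omega>))"

definition singular_cause ::
  "'v set \<Rightarrow> 'o set \<Rightarrow> (('v \<Rightarrow> bool) \<Rightarrow> 'o \<Rightarrow> bool) \<Rightarrow> 'v lit set \<Rightarrow> bool" where
  "singular_cause C Omega Dpo B = (\<exists>\<omega>\<in>Omega. singular_cause_for C Dpo B \<omega>)"

definition pos_monotonic ::
  "'o set \<Rightarrow> 'v set \<Rightarrow> (('v \<Rightarrow> bool) \<Rightarrow> 'o \<Rightarrow> bool) \<Rightarrow> 'v lit \<Rightarrow> bool" where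
  "pos_monotonic Omega C Dpo L =
     (\<forall>\<omega>\<in>Omega. \<forall>c\<in>assignments C. \<forall>c'\<in>assignments C.
        (\<forall>v. v \<noteq> fst L \<longrightarrow> c v = c' v) \<and> lit_val L c \<and> \<not> lit_val L c'
        \<longrightarrow> (Dpo c' \<omega> \<longrightarrow> Dpo c \<omega>))"

definition C_at :: "'v set \<Rightarrow> ('v \<Rightarrow> 'o \<Rightarrow> bool) \<Rightarrow> 'o \<Rightarrow> ('v \<Rightarrow> bool)" where
  "C_at C Cv \<omega> = (\<lambda>v. if v \<in> C then Cv v \<omega> else False)"

text \<open>W suffices to adjust for confounding of C on D: for all c, w,
  D_c is independent of (the vector) C given W = w.  Written in product form
  P(D_c=1, C=c', W=w) P(W=w) = P(D_c=1, W=w) P(C=c', W=w) for every value c' of C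
  (for binary D_c this is conditional independence; vacuous when P(W=w)=0).\<close>
definition adjusts_confounding ::
  "'o measure \<Rightarrow> 'v set \<Rightarrow> ('v \<Rightarrow> 'o \<Rightarrow> bool) \<Rightarrow> (('v \<Rightarrow> bool) \<Rightarrow> 'o \<Rightarrow> bool)
   \<Rightarrow> ('o \<Rightarrow> 'w) \<Rightarrow> bool" where
  "adjusts_confounding M C Cv Dpo Wr =
     (\<forall>c\<in>assignments C. \<forall>c'\<in>assignments C. \<forall>w.
        measure M {\<omega>\<in>space M. Dpo c \<omega> \<and> C_at C Cv \<omega> = c' \<and> Wr \<omega> = w}
          * measure M {\<omega>\<in>space M. Wr \<omega> = w}
        = measure M {\<omega>\<in>space M. Dpo c \<omega> \<and> Wr \<omega> = w}
          * measure M {\<omega>\<in>space M. C_at C Cv \<omega> = c' \<and> Wr \<omega> = w})"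

definition lit_rv :: "('v \<Rightarrow> 'o \<Rightarrow> bool) \<Rightarrow> 'v lit \<Rightarrow> 'o \<Rightarrow> bool" where
  "lit_rv Cv L \<omega> = (Cv (fst L) \<omega> = snd L)"

definition cond_event ::
  "'o measure \<Rightarrow> ('v \<Rightarrow> 'o \<Rightarrow> bool) \<Rightarrow> ('o \<Rightarrow> 'w) \<Rightarrow> 'v lit set \<Rightarrow> 'v lit set \<Rightarrow> 'w \<Rightarrow> 'o set" where
  "cond_event M Cv Wr B Bt w =
     {\<omega>\<in>space M. (\<forall>L\<in>B. lit_rv Cv L \<omega> = (L \<notin> Bt)) \<and> Wr \<omega> = w}"

definition cond_exp :: "'o measure \<Rightarrow> ('o \<Rightarrow> bool) \<Rightarrow> 'o set \<Rightarrow> real" where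
  "cond_exp M D A = measure M {\<omega>\<in>A. D \<omega>} / measure M A"

definition is_tree :: "'a set \<Rightarrow> 'a set set \<Rightarrow> bool" where
  "is_tree S T =
     (finite S \<and> (\<forall>E\<in>T. E \<subseteq> S \<and> card E = 2) \<and> card T = card S - 1 \<and>
      (\<forall>x\<in>S. \<forall>y\<in>S. (x, y) \<in> {(a, b). {a, b} \<in> T}\<^sup>*))"

end

theory Submission
  imports Defs
begin



lemma cross_edge:
  assumes "(x, y) \<in> R\<^sup>*" "x \<in> S" "y \<notin> S"
  shows "\<exists>a b. (a, b) \<in> R \<and> a \<in> S \<and> b \<notin> S"
  using assms
proof (induction rule: rtrancl_induct)
  case base then show ?case by simp
next
  case (step y z)
  then show ?case by (cases "y \<in> S") auto
qed

lemma tree_cut: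
  assumes finV: "finite V" and edges: "\<forall>E\<in>T. E \<subseteq> V \<and> card E = 2"
    and conn: "\<forall>x\<in>V. \<forall>y\<in>V. (x, y) \<in> {(a, b). {a, b} \<in> T}\<^sup>*"
  shows "S \<subseteq> V \<Longrightarrow> S \<noteq> {} \<Longrightarrow> card (V - S) \<le> card {E\<in>T. \<not> E \<subseteq> S}"
proof (induction "card (V - S)" arbitrary: S)
  case 0
  then show ?case by simp
next
  case (Suc n)
  have finT: "finite T"
    by (rule finite_subset[of T "Pow V"]) (use edges finV in auto)
  from Suc.prems obtain s where s: "s \<in> S" by auto
  have "V - S \<noteq> {}"
  proof
    assume e: "V - S = {}"
    have "card (V - S) = 0" by (subst e) simp
    then show False using Suc.hyps(2) by simp
  qed
  then obtain v where v: "v \<in> V" "v \<notin> S" by auto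
  have sV: "s \<in> V" using s Suc.prems(1) by blast
  have "(s, v) \<in> {(a, b). {a, b} \<in> T}\<^sup>*" using conn sV v(1) by blast
  from cross_edge[OF this s v(2)] obtain a b where ab: "{a, b} \<in> T" "a \<in> S" "b \<notin> S" by auto
  have bV: "b \<in> V" using ab edges by auto
  let ?S' = "insert b S"
  have c: "n = card (V - ?S')"
  proof -
    have e1: "V - ?S' = (V - S) - {b}" by blast
    have bin: "b \<in> V - S" using bV ab(3) by blast
    have fin: "finite (V - S)" using finV by blast
    have "card ((V - S) - {b}) = card (V - S) - 1" using card_Diff_singleton[OF bin] .
    then show ?thesis using e1 Suc.hyps(2) by simp
  qed
  have IH: "card (V - ?S') \<le> card {E\<in>T. \<not> E \<subseteq> ?S'}"
  proof (rule Suc.hyps(1)[OF c])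
    show "?S' \<subseteq> V" using Suc.prems(1) bV by blast
    show "?S' \<noteq> {}" by blast
  qed
  have sub: "{E\<in>T. \<not> E \<subseteq> ?S'} \<subseteq> {E\<in>T. \<not> E \<subseteq> S} - {{a,b}}"
    using ab by auto
  have mem: "{a,b} \<in> {E\<in>T. \<not> E \<subseteq> S}" using ab by auto
  have "card {E\<in>T. \<not> E \<subseteq> ?S'} \<le> card ({E\<in>T. \<not> E \<subseteq> S} - {{a,b}})"
    by (rule card_mono) (use finT sub in auto)
  also have "\<dots> = card {E\<in>T. \<not> E \<subseteq> S} - 1"
    using mem finT by (simp add: card_Diff_singleton)
  finally have le1: "card {E\<in>T. \<not> E \<subseteq> ?S'} \<le> card {E\<in>T. \<not> E \<subseteq> S} - 1" .
  have "card {E\<in>T. \<not> E \<subseteq> S} > 0" using mem finT by (auto simp: card_gt_0_iff)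
  with le1 have "card {E\<in>T. \<not> E \<subseteq> ?S'} + 1 \<le> card {E\<in>T. \<not> E \<subseteq> S}" by linarith
  then show ?case using IH Suc.hyps(2) c by linarith
qed

lemma tree_inside:
  assumes tr: "is_tree V T" and SV: "S \<subseteq> V" and Sne: "S \<noteq> {}"
  shows "card {E\<in>T. E \<subseteq> S} + 1 \<le> card S"
proof -
  have finV: "finite V" and edges: "\<forall>E\<in>T. E \<subseteq> V \<and> card E = 2"
    and cT: "card T = card V - 1"
    and conn: "\<forall>x\<in>V. \<forall>y\<in>V. (x, y) \<in> {(a, b). {a, b} \<in> T}\<^sup>*"
    using tr unfolding is_tree_def by blast+
  have finT: "finite T"
    by (rule finite_subset[of T "Pow V"]) (use edges finV in auto)
  have cut: "card (V - S) \<le> card {E\<in>T. \<not> E \<subseteq> S}"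
    using tree_cut[OF finV edges conn SV Sne] .
  have "card T = card {E\<in>T. E \<subseteq> S} + card {E\<in>T. \<not> E \<subseteq> S}"
  proof -
    have u: "T = {E\<in>T. E \<subseteq> S} \<union> {E\<in>T. \<not> E \<subseteq> S}" by auto
    have "card ({E\<in>T. E \<subseteq> S} \<union> {E\<in>T. \<not> E \<subseteq> S}) = card {E\<in>T. E \<subseteq> S} + card {E\<in>T. \<not> E \<subseteq> S}"
      by (rule card_Un_disjoint) (use finT in auto)
    moreover have "card T = card ({E\<in>T. E \<subseteq> S} \<union> {E\<in>T. \<not> E \<subseteq> S})"
      using u by (rule arg_cong)
    ultimately show ?thesis by linarith
  qed
  moreover have "card (V - S) = card V - card S" using finV SV by (simp add: card_Diff_subset finite_subset)
  moreover have "card S \<le> card V" using finV SV card_mono by blast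
  moreover have "card S > 0" using Sne SV finV by (meson card_gt_0_iff finite_subset)
  ultimately show ?thesis using cT cut by linarith
qed




definition flipA :: "'v lit set \<Rightarrow> 'v lit set \<Rightarrow> 'v \<Rightarrow> bool" where
  "flipA B Bt v = (if (v, True) \<in> B then (v, True) \<notin> Bt else (v, False) \<in> Bt)"

lemma flipA_assign:
  assumes "B \<in> dotP C" "Bt \<subseteq> B" shows "flipA B Bt \<in> assignments C"
  using assms unfolding assignments_def flipA_def dotP_def lits_def by auto

lemma flipA_lit:
  assumes "B \<in> dotP C" "L \<in> B" shows "lit_val L (flipA B Bt) = (L \<notin> Bt)"
proof -
  obtain v b where L: "L = (v, b)" by force
  show ?thesis
  proof (cases b)
    case True then show ?thesis using assms L unfolding lit_val_def flipA_def by auto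
  next
    case False
    then have "(v, True) \<notin> B" using assms L unfolding dotP_def by auto
    then show ?thesis using False assms L unfolding lit_val_def flipA_def by auto
  qed
qed

lemma B_full:
  assumes B: "B \<in> dotP C" and finC: "finite C" and cB: "card B = card C" and v: "v \<in> C"
  shows "\<exists>b. (v, b) \<in> B"
proof -
  have BC: "fst ` B \<subseteq> C" using B unfolding dotP_def lits_def by auto
  have inj: "inj_on fst B"
  proof (rule inj_onI)
    fix x y assume "x \<in> B" "y \<in> B" "fst x = fst y"
    then show "x = y"
    proof -
      assume xy: "x \<in> B" "y \<in> B" "fst x = fst y"
      obtain v b where x: "x = (v, b)" by force
      obtain b' where y: "y = (v, b')" using xy(3) x by (metis fst_conv prod.collapse)
      have nc: "\<not> ((v, True) \<in> B \<and> (v, False) \<in> B)" using B unfolding dotP_def by blast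
      have "b = b'"
      proof (rule ccontr)
        assume "b \<noteq> b'"
        then show False using nc xy(1,2) x y by (cases b; cases b') auto
      qed
      then show ?thesis using x y by simp
    qed
  qed
  have "card (fst ` B) = card C" using card_image[OF inj] cB by simp
  then have "fst ` B = C" using card_subset_eq[OF finC BC] by simp
  then show ?thesis using v by force
qed

lemma cond_event_eq:
  assumes B: "B \<in> dotP C" and finC: "finite C" and cB: "card B = card C" and Bt: "Bt \<subseteq> B"
  shows "cond_event M Cv Wr B Bt w = {\<omega>\<in>space M. C_at C Cv \<omega> = flipA B Bt \<and> Wr \<omega> = w}"
proof -
  have BC: "\<And>v b. (v, b) \<in> B \<Longrightarrow> v \<in> C" using B unfolding dotP_def lits_def by auto
  have eqv: "(\<forall>L\<in>B. lit_rv Cv L \<omega> = (L \<notin> Bt)) = (C_at C Cv \<omega> = flipA B Bt)" for \<omega>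
  proof
    assume H: "\<forall>L\<in>B. lit_rv Cv L \<omega> = (L \<notin> Bt)"
    show "C_at C Cv \<omega> = flipA B Bt"
    proof
      fix v show "C_at C Cv \<omega> v = flipA B Bt v"
      proof (cases "v \<in> C")
        case True
        then obtain b where vb: "(v, b) \<in> B" using B_full[OF B finC cB] by blast
        have "lit_val (v, b) (flipA B Bt) = ((v, b) \<notin> Bt)" using flipA_lit[OF B vb] .
        moreover have "lit_rv Cv (v, b) \<omega> = ((v, b) \<notin> Bt)" using H vb by blast
        ultimately show ?thesis using True unfolding C_at_def lit_val_def lit_rv_def by auto
      next
        case False
        then show ?thesis using flipA_assign[OF B Bt] unfolding C_at_def assignments_def by auto
      qed
    qed
  next
    assume H: "C_at C Cv \<omega> = flipA B Bt"
    show "\<forall>L\<in>B. lit_rv Cv L \<omega> = (L \<notin> Bt)"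
    proof
      fix L assume L: "L \<in> B"
      obtain v b where vb: "L = (v, b)" by force
      have "v \<in> C" using BC L vb by auto
      then have "Cv v \<omega> = flipA B Bt v" using fun_cong[OF H, of v] unfolding C_at_def by simp
      then show "lit_rv Cv L \<omega> = (L \<notin> Bt)"
        using flipA_lit[OF B L, of Bt] vb unfolding lit_rv_def lit_val_def by auto
    qed
  qed
  show ?thesis unfolding cond_event_def by (simp only: eqv)
qed

lemma flipA_mono_step:
  assumes B: "B \<in> dotP C" and pm: "pos_monotonic Om C Dpo L" and L: "L \<in> Bt" and Bt: "Bt \<subseteq> B"
    and om: "\<omega> \<in> Om" and D: "Dpo (flipA B Bt) \<omega>"
  shows "Dpo (flipA B (Bt - {L})) \<omega>"
proof -
  have a1: "flipA B (Bt - {L}) \<in> assignments C" using flipA_assign[OF B] Bt by blast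
  have a2: "flipA B Bt \<in> assignments C" using flipA_assign[OF B Bt] .
  have eq: "\<forall>v. v \<noteq> fst L \<longrightarrow> flipA B (Bt - {L}) v = flipA B Bt v"
    unfolding flipA_def by force
  have l1: "lit_val L (flipA B (Bt - {L}))" using flipA_lit[OF B] L Bt by blast
  have l2: "\<not> lit_val L (flipA B Bt)" using flipA_lit[OF B] L Bt by blast
  show ?thesis using pm om a1 a2 eq l1 l2 D unfolding pos_monotonic_def by blast
qed

lemma flipA_mono:
  assumes B: "B \<in> dotP C" and om: "\<omega> \<in> Om" and finS: "finite S"
  shows "S \<subseteq> P \<Longrightarrow> (\<And>L. L \<in> P \<Longrightarrow> pos_monotonic Om C Dpo L) \<Longrightarrow> K \<inter> S = {} \<Longrightarrow>
    K \<union> S \<subseteq> B \<Longrightarrow> Dpo (flipA B (K \<union> S)) \<omega> \<Longrightarrow> Dpo (flipA B K) \<omega>"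
  using finS
proof (induction S rule: finite_induct)
  case empty then show ?case by simp
next
  case (insert x S)
  have "Dpo (flipA B ((K \<union> insert x S) - {x})) \<omega>"
    by (rule flipA_mono_step[OF B _ _ _ om]) (use insert in auto)
  moreover have "(K \<union> insert x S) - {x} = K \<union> S" using insert by auto
  ultimately show ?case using insert by auto
qed




lemma comb:
  fixes F :: "'a set \<Rightarrow> real"
  assumes tr: "is_tree P T" and finQ: "finite Q"
    and bin: "\<And>X. F X = 0 \<or> F X = 1"
    and mono: "\<And>E L. E \<in> T \<Longrightarrow> L \<in> E \<Longrightarrow> F E \<le> F {L}"
    and ineq: "F {} - (\<Sum>L\<in>P. F {L}) - (\<Sum>X\<in>{X. X \<subseteq> Q \<and> X \<noteq> {}}. F X) + (\<Sum>E\<in>T. F E) > 0"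
  shows "F {} = 1 \<and> (\<forall>L\<in>P. F {L} = 0) \<and> (\<forall>X. X \<subseteq> Q \<and> X \<noteq> {} \<longrightarrow> F X = 0)"
proof -
  have finP: "finite P" and edges: "\<forall>E\<in>T. E \<subseteq> P \<and> card E = 2"
    using tr unfolding is_tree_def by auto
  have finT: "finite T"
    by (rule finite_subset[of T "Pow P"]) (use edges finP in auto)
  define S where "S = {L\<in>P. F {L} = 1}"
  have SP: "S \<subseteq> P" unfolding S_def by auto
  have sP: "(\<Sum>L\<in>P. F {L}) = real (card S)"
  proof -
    have "(\<Sum>L\<in>P. F {L}) = (\<Sum>L\<in>P. of_bool (F {L} = 1))"
      by (rule sum.cong) (use bin in auto)
    also have "\<dots> = real (card S)" using finP unfolding S_def
      by (simp add: Collect_conj_eq Int_commute)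
    finally show ?thesis .
  qed
  have eT: "(\<Sum>E\<in>T. F E) \<le> real (card {E\<in>T. E \<subseteq> S})"
  proof -
    have "(\<Sum>E\<in>T. F E) \<le> (\<Sum>E\<in>T. of_bool (E \<subseteq> S))"
    proof (rule sum_mono)
      fix E assume E: "E \<in> T"
      show "F E \<le> of_bool (E \<subseteq> S)"
      proof (cases "F E = 1")
        case True
        have "E \<subseteq> S"
        proof
          fix L assume "L \<in> E"
          then have "F {L} \<ge> 1" using mono[OF E] True by force
          then have "F {L} = 1" using bin[of "{L}"] by auto
          then show "L \<in> S" using \<open>L \<in> E\<close> E edges unfolding S_def by auto
        qed
        then show ?thesis using True by simp
      next
        case False then show ?thesis using bin[of E] by simp
      qed
    qed
    also have "\<dots> = real (card {E\<in>T. E \<subseteq> S})" using finT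
      by (simp add: Collect_conj_eq Int_commute)
    finally show ?thesis .
  qed
  have finI: "finite {X. X \<subseteq> Q \<and> X \<noteq> {}}"
    by (rule finite_subset[of _ "Pow Q"]) (use finQ in auto)
  have Fnn: "0 \<le> F X" for X using bin[of X] by auto
  have qnn: "(\<Sum>X\<in>{X. X \<subseteq> Q \<and> X \<noteq> {}}. F X) \<ge> 0"
    by (rule sum_nonneg) (rule Fnn)
  have F0: "F {} \<le> 1" using bin[of "{}"] by auto
  have Se: "S = {}"
  proof (rule ccontr)
    assume "S \<noteq> {}"
    from tree_inside[OF tr SP this] have "card {E\<in>T. E \<subseteq> S} + 1 \<le> card S" .
    then have "real (card {E\<in>T. E \<subseteq> S}) + 1 \<le> real (card S)" by linarith
    then show False using ineq sP eT qnn F0 by linarith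
  qed
  have "{E\<in>T. E \<subseteq> S} = {}"
  proof -
    { fix E assume "E \<in> T" "E \<subseteq> S"
      then have "card E = 2" "E = {}" using edges Se by auto
      then have False by simp }
    then show ?thesis by auto
  qed
  then have e0: "(\<Sum>E\<in>T. F E) \<le> 0" using eT by (metis card.empty of_nat_0)
  have P0: "\<forall>L\<in>P. F {L} = 0" using Se bin unfolding S_def by blast
  then have "(\<Sum>L\<in>P. F {L}) = 0" by simp
  then have main: "F {} - (\<Sum>X\<in>{X. X \<subseteq> Q \<and> X \<noteq> {}}. F X) > 0" using ineq e0 by linarith
  then have "F {} = 1" using qnn bin[of "{}"] by auto
  moreover have "\<forall>X. X \<subseteq> Q \<and> X \<noteq> {} \<longrightarrow> F X = 0"
  proof (intro allI impI)
    fix X assume X: "X \<subseteq> Q \<and> X \<noteq> {}"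
    have "F X \<le> (\<Sum>X\<in>{X. X \<subseteq> Q \<and> X \<noteq> {}}. F X)"
      by (rule member_le_sum) (use X finI Fnn in auto)
    then show "F X = 0" using main \<open>F {} = 1\<close> bin[of X] by auto
  qed
  ultimately show ?thesis using P0 by blast
qed




lemma assign_unique:
  assumes B: "B \<in> dotP C" and finC: "finite C" and cB: "card B = card C"
    and c: "c \<in> assignments C" and cv: "conj_val B c"
  shows "c = flipA B {}"
proof
  fix v show "c v = flipA B {} v"
  proof (cases "v \<in> C")
    case True
    then obtain b where vb: "(v, b) \<in> B" using B_full[OF B finC cB] by blast
    have "lit_val (v, b) c" using cv vb unfolding conj_val_def by blast
    moreover have "lit_val (v, b) (flipA B {})" using flipA_lit[OF B vb] by simp
    ultimately show ?thesis unfolding lit_val_def by simp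
  next
    case False
    then show ?thesis using c flipA_assign[OF B, of "{}"] unfolding assignments_def by auto
  qed
qed

lemma other_cause:
  assumes B: "B \<in> dotP C" and finC: "finite C" and cB: "card B = card C"
    and B3: "B3 \<in> dotP C"
  shows "conj_val B3 (flipA B {L\<in>B. (fst L, \<not> snd L) \<in> B3})"
    and "{L\<in>B. (fst L, \<not> snd L) \<in> B3} = {} \<Longrightarrow> B3 \<subseteq> B"
proof -
  let ?Bt = "{L\<in>B. (fst L, \<not> snd L) \<in> B3}"
  show "conj_val B3 (flipA B ?Bt)"
    unfolding conj_val_def
  proof
    fix L assume L: "L \<in> B3"
    obtain v b where vb: "L = (v, b)" by force
    have "v \<in> C" using B3 L vb unfolding dotP_def lits_def by auto
    then obtain b0 where vb0: "(v, b0) \<in> B" using B_full[OF B finC cB] by blast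
    have fl: "lit_val (v, b0) (flipA B ?Bt) = ((v, b0) \<notin> ?Bt)" using flipA_lit[OF B vb0] .
    show "lit_val L (flipA B ?Bt)"
    proof (cases "b0 = b")
      case True
      have "(v, \<not> b) \<notin> B3" using B3 L vb unfolding dotP_def by (cases b) auto
      then have "(v, b0) \<notin> ?Bt" using True by auto
      then show ?thesis using fl True vb unfolding lit_val_def by simp
    next
      case False
      have "(v, b0) \<in> ?Bt" using vb0 L vb False by (cases b; cases b0) auto
      then show ?thesis using fl False vb unfolding lit_val_def by (cases b; cases b0) auto
    qed
  qed
  assume e: "?Bt = {}"
  show "B3 \<subseteq> B"
  proof
    fix L assume L: "L \<in> B3"
    obtain v b where vb: "L = (v, b)" by force
    have "v \<in> C" using B3 L vb unfolding dotP_def lits_def by auto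
    then obtain b0 where vb0: "(v, b0) \<in> B" using B_full[OF B finC cB] by blast
    show "L \<in> B"
    proof (cases "b0 = b")
      case True then show ?thesis using vb vb0 by simp
    next
      case False
      have "(v, b0) \<in> ?Bt" using vb0 L vb False by (cases b; cases b0) auto
      then show ?thesis using e by blast
    qed
  qed
qed


theorem mainTheorem16:
  fixes M :: "'o measure"
    and C :: "'v set" and Cv :: "'v \<Rightarrow> 'o \<Rightarrow> bool"
    and D :: "'o \<Rightarrow> bool" and Dpo :: "('v \<Rightarrow> bool) \<Rightarrow> 'o \<Rightarrow> bool"
    and Wr :: "'o \<Rightarrow> 'w" and w :: 'w
    and B Bplus B' :: "'v lit set" and T :: "'v lit set set"
  assumes prob: "prob_space M"
    and finC: "finite C"
    and meas_C: "\<And>x. x \<in> C \<Longrightarrow> {\<omega>\<in>space M. Cv x \<omega>} \<in> sets M"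
    and meas_W: "\<And>v. {\<omega>\<in>space M. Wr \<omega> = v} \<in> sets M"
    and meas_D: "{\<omega>\<in>space M. D \<omega>} \<in> sets M"
    and meas_Dpo: "\<And>c. c \<in> assignments C \<Longrightarrow> {\<omega>\<in>space M. Dpo c \<omega>} \<in> sets M"
    and consistency: "\<And>\<omega>. \<omega> \<in> space M \<Longrightarrow> D \<omega> = Dpo (C_at C Cv \<omega>) \<omega>"
    and B_split: "B = Bplus \<union> B'" and B_disj: "Bplus \<inter> B' = {}"
    and B_in: "B \<in> dotP C"
    and B_card: "card B = card C"
    and monotone: "\<And>L. L \<in> Bplus \<Longrightarrow> pos_monotonic (space M) C Dpo L"
    and adjust: "adjusts_confounding M C Cv Dpo Wr"
    and tree: "is_tree Bplus T"
    and pos: "\<And>Bt. Bt \<in> {{}} \<union> {{L} | L. L \<in> Bplus} \<union> {Bt. Bt \<subseteq> B' \<and> Bt \<noteq> {}} \<union> T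
               \<Longrightarrow> measure M (cond_event M Cv Wr B Bt w) > 0"
    and ineq: "cond_exp M D (cond_event M Cv Wr B {} w)
       - (\<Sum>L\<in>Bplus. cond_exp M D (cond_event M Cv Wr B {L} w))
       - (\<Sum>Bt\<in>{Bt. Bt \<subseteq> B' \<and> Bt \<noteq> {}}. cond_exp M D (cond_event M Cv Wr B Bt w))
       + (\<Sum>E\<in>T. cond_exp M D (cond_event M Cv Wr B E w)) > 0"
  shows "singular_cause C (space M) Dpo B"
proof -
  interpret P: prob_space M by (rule prob)
  have finB: "finite B"
  proof (rule finite_subset[of B "C \<times> UNIV"])
    show "B \<subseteq> C \<times> UNIV" using B_in unfolding dotP_def lits_def by blast
    show "finite (C \<times> (UNIV :: bool set))" using finC by simp
  qed
  have Bp_sub: "Bplus \<subseteq> B" and B'_sub: "B' \<subseteq> B" using B_split by blast+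
  have trE: "\<forall>E\<in>T. E \<subseteq> Bplus \<and> card E = 2" using tree by (simp add: is_tree_def)
  have Tsub: "\<And>E. E \<in> T \<Longrightarrow> E \<subseteq> Bplus" and Tcard: "\<And>E. E \<in> T \<Longrightarrow> card E = 2"
    using trE by blast+
  define Ww where "Ww = {\<omega>\<in>space M. Wr \<omega> = w}"
  define X where "X Bt = {\<omega>\<in>space M. Dpo (flipA B Bt) \<omega> \<and> Wr \<omega> = w}" for Bt
  define q where "q Bt = measure M (X Bt)" for Bt
  define pW where "pW = measure M Ww"
  define Q where "Q = {Bt. Bt \<subseteq> B' \<and> Bt \<noteq> {}}"
  define I where "I = {{}} \<union> {{L} | L. L \<in> Bplus} \<union> Q \<union> T"
  have IB: "Bt \<subseteq> B" if BtI: "Bt \<in> I" for Bt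
  proof -
    have "Bt = {} \<or> (\<exists>L\<in>Bplus. Bt = {L}) \<or> Bt \<subseteq> B' \<or> Bt \<in> T"
      using BtI unfolding I_def Q_def by blast
    then show ?thesis using Bp_sub B'_sub Tsub by blast
  qed
  have Xs: "\<And>Bt. Bt \<subseteq> B \<Longrightarrow> X Bt \<in> sets M"
  proof -
    fix Bt assume Bt: "Bt \<subseteq> B"
    have "X Bt = {\<omega>\<in>space M. Dpo (flipA B Bt) \<omega>} \<inter> {\<omega>\<in>space M. Wr \<omega> = w}"
      unfolding X_def by blast
    then show "X Bt \<in> sets M"
      using meas_Dpo[OF flipA_assign[OF B_in Bt]] meas_W[of w] by simp
  qed
  have posI: "\<And>Bt. Bt \<in> I \<Longrightarrow> measure M (cond_event M Cv Wr B Bt w) > 0"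
    unfolding I_def Q_def by (rule pos)
  have pWpos: "pW > 0"
  proof -
    have "{} \<in> I" unfolding I_def by blast
    then have "measure M (cond_event M Cv Wr B {} w) > 0" by (rule posI)
    moreover have "cond_event M Cv Wr B {} w \<subseteq> Ww" unfolding cond_event_def Ww_def by blast
    moreover have "Ww \<in> sets M" unfolding Ww_def by (rule meas_W)
    ultimately have "measure M (cond_event M Cv Wr B {} w) \<le> measure M Ww"
      by (intro P.finite_measure_mono)
    then show ?thesis unfolding pW_def using \<open>measure M (cond_event M Cv Wr B {} w) > 0\<close> by linarith
  qed
  have ce: "\<And>Bt. Bt \<in> I \<Longrightarrow> cond_exp M D (cond_event M Cv Wr B Bt w) = q Bt / pW"
  proof -
    fix Bt assume BtI: "Bt \<in> I"
    have Bt: "Bt \<subseteq> B" using IB[OF BtI] .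
    define c where "c = flipA B Bt"
    have cA: "c \<in> assignments C" unfolding c_def using flipA_assign[OF B_in Bt] .
    define A where "A = {\<omega>\<in>space M. C_at C Cv \<omega> = c \<and> Wr \<omega> = w}"
    have ceq: "cond_event M Cv Wr B Bt w = A"
      unfolding A_def c_def by (rule cond_event_eq[OF B_in finC B_card Bt])
    have mA: "measure M A > 0" using posI[OF BtI] ceq by simp
    have DA: "{\<omega>\<in>A. D \<omega>} = {\<omega>\<in>space M. Dpo c \<omega> \<and> C_at C Cv \<omega> = c \<and> Wr \<omega> = w}"
      unfolding A_def using consistency by auto
    have adj: "measure M {\<omega>\<in>space M. Dpo c \<omega> \<and> C_at C Cv \<omega> = c \<and> Wr \<omega> = w} * pW
        = q Bt * measure M A"
      using adjust cA unfolding adjusts_confounding_def q_def X_def A_def pW_def Ww_def c_def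
      by blast
    show "cond_exp M D (cond_event M Cv Wr B Bt w) = q Bt / pW"
      unfolding cond_exp_def ceq DA using adj mA pWpos by (simp add: field_simps)
  qed
  have finQ: "finite Q" unfolding Q_def
    by (rule finite_subset[of _ "Pow B'"]) (use finB B'_sub finite_subset in auto)
  have finP: "finite Bplus" using finB Bp_sub finite_subset by blast
  have finT: "finite T"
    by (rule finite_subset[of T "Pow Bplus"]) (use Tsub finP in auto)
  define num where "num = q {} - (\<Sum>L\<in>Bplus. q {L}) - (\<Sum>Bt\<in>Q. q Bt) + (\<Sum>E\<in>T. q E)"
  have "q {} / pW - (\<Sum>L\<in>Bplus. q {L} / pW) - (\<Sum>Bt\<in>Q. q Bt / pW) + (\<Sum>E\<in>T. q E / pW) > 0"
  proof -
    have e1: "cond_exp M D (cond_event M Cv Wr B {} w) = q {} / pW"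
      by (rule ce) (simp add: I_def)
    have e2: "(\<Sum>L\<in>Bplus. cond_exp M D (cond_event M Cv Wr B {L} w)) = (\<Sum>L\<in>Bplus. q {L} / pW)"
      by (rule sum.cong) (auto intro!: ce simp: I_def)
    have e3: "(\<Sum>Bt\<in>Q. cond_exp M D (cond_event M Cv Wr B Bt w)) = (\<Sum>Bt\<in>Q. q Bt / pW)"
      by (rule sum.cong) (auto intro!: ce simp: I_def)
    have e4: "(\<Sum>E\<in>T. cond_exp M D (cond_event M Cv Wr B E w)) = (\<Sum>E\<in>T. q E / pW)"
      by (rule sum.cong) (auto intro!: ce simp: I_def)
    show ?thesis using ineq e1 e2 e3 e4 unfolding Q_def by simp
  qed
  then have "num / pW > 0" unfolding num_def
    by (simp add: diff_divide_distrib add_divide_distrib sum_divide_distrib)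
  then have numpos: "num > 0" using pWpos by (simp add: zero_less_divide_iff)
  define g where "g \<omega> = (indicator (X {}) \<omega> :: real) - (\<Sum>L\<in>Bplus. indicator (X {L}) \<omega>)
     - (\<Sum>Bt\<in>Q. indicator (X Bt) \<omega>) + (\<Sum>E\<in>T. indicator (X E) \<omega>)" for \<omega>
  have intI: "integrable M (indicator (X Bt) :: 'o \<Rightarrow> real)" if BtI: "Bt \<in> I" for Bt
  proof -
    have s: "X Bt \<in> sets M" using Xs IB BtI by blast
    show ?thesis using s P.emeasure_finite[of "X Bt"] by (auto simp: less_top[symmetric])
  qed
  have Xsp: "\<And>Bt. X Bt \<inter> space M = X Bt" unfolding X_def by blast
  have intq: "\<And>Bt. integral\<^sup>L M (indicator (X Bt) :: 'o \<Rightarrow> real) = q Bt"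
    unfolding q_def by (simp add: X_def Int_absorb2 Collect_conj_eq)
  have "integral\<^sup>L M g = num"
  proof -
    have iP: "integrable M (\<lambda>\<omega>. \<Sum>L\<in>Bplus. indicator (X {L}) \<omega> :: real)"
      by (rule Bochner_Integration.integrable_sum) (auto intro!: intI simp: I_def)
    have iQ: "integrable M (\<lambda>\<omega>. \<Sum>Bt\<in>Q. indicator (X Bt) \<omega> :: real)"
      by (rule Bochner_Integration.integrable_sum) (auto intro!: intI simp: I_def)
    have iT: "integrable M (\<lambda>\<omega>. \<Sum>E\<in>T. indicator (X E) \<omega> :: real)"
      by (rule Bochner_Integration.integrable_sum) (auto intro!: intI simp: I_def)
    have i0: "integrable M (indicator (X {}) :: 'o \<Rightarrow> real)" by (rule intI) (simp add: I_def)
    have sP: "integral\<^sup>L M (\<lambda>\<omega>. \<Sum>L\<in>Bplus. indicator (X {L}) \<omega> :: real) = (\<Sum>L\<in>Bplus. q {L})"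
      by (subst Bochner_Integration.integral_sum) (auto intro!: intI simp: I_def Xsp q_def)
    have sQ: "integral\<^sup>L M (\<lambda>\<omega>. \<Sum>Bt\<in>Q. indicator (X Bt) \<omega> :: real) = (\<Sum>Bt\<in>Q. q Bt)"
      by (subst Bochner_Integration.integral_sum) (auto intro!: intI simp: I_def Xsp q_def)
    have sT: "integral\<^sup>L M (\<lambda>\<omega>. \<Sum>E\<in>T. indicator (X E) \<omega> :: real) = (\<Sum>E\<in>T. q E)"
      by (subst Bochner_Integration.integral_sum) (auto intro!: intI simp: I_def Xsp q_def)
    have "integral\<^sup>L M g = integral\<^sup>L M (indicator (X {})) - integral\<^sup>L M (\<lambda>\<omega>. \<Sum>L\<in>Bplus. indicator (X {L}) \<omega> :: real)
       - integral\<^sup>L M (\<lambda>\<omega>. \<Sum>Bt\<in>Q. indicator (X Bt) \<omega> :: real) + integral\<^sup>L M (\<lambda>\<omega>. \<Sum>E\<in>T. indicator (X E) \<omega> :: real)"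
      unfolding g_def using i0 iP iQ iT by simp
    then show ?thesis using sP sQ sT intq unfolding num_def by simp
  qed
  obtain \<omega> where om: "\<omega> \<in> space M" and gpos: "g \<omega> > 0"
  proof (rule ccontr)
    assume "\<not> thesis"
    then have "\<forall>\<omega>\<in>space M. g \<omega> \<le> 0" using that by force
    then have "0 \<le> integral\<^sup>L M (\<lambda>\<omega>. - g \<omega>)" by (intro Bochner_Integration.integral_nonneg) auto
    then show False using \<open>integral\<^sup>L M g = num\<close> numpos by simp
  qed
  define F where "F Bt = (indicator (X Bt) \<omega> :: real)" for Bt
  have FX: "\<And>Bt. F Bt = 1 \<longleftrightarrow> Dpo (flipA B Bt) \<omega> \<and> Wr \<omega> = w"
    unfolding F_def X_def using om by (simp add: indicator_def)
  have res: "F {} = 1 \<and> (\<forall>L\<in>Bplus. F {L} = 0) \<and> (\<forall>Y. Y \<subseteq> B' \<and> Y \<noteq> {} \<longrightarrow> F Y = 0)"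
  proof (rule comb[OF tree])
    show "finite B'" using finB B'_sub finite_subset by blast
    show "\<And>Y. F Y = 0 \<or> F Y = 1" unfolding F_def by (simp add: indicator_def)
    show "F {} - (\<Sum>L\<in>Bplus. F {L}) - (\<Sum>Y\<in>{Y. Y \<subseteq> B' \<and> Y \<noteq> {}}. F Y) + (\<Sum>E\<in>T. F E) > 0"
      using gpos unfolding g_def F_def Q_def by simp
    show "\<And>E L. E \<in> T \<Longrightarrow> L \<in> E \<Longrightarrow> F E \<le> F {L}"
    proof -
      fix E L assume E: "E \<in> T" and L: "L \<in> E"
      show "F E \<le> F {L}"
      proof (cases "F E = 1")
        case True
        then have d: "Dpo (flipA B E) \<omega>" and wr: "Wr \<omega> = w" using FX by auto
        have "finite E"
        proof (rule ccontr)
          assume "infinite E" then have "card E = 0" by simp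
          then show False using Tcard[OF E] by simp
        qed
        then have finE: "finite (E - {L})" by blast
        have "Dpo (flipA B {L}) \<omega>"
        proof (rule flipA_mono[OF B_in om finE])
          show "E - {L} \<subseteq> Bplus" using Tsub[OF E] by blast
          show "\<And>L. L \<in> Bplus \<Longrightarrow> pos_monotonic (space M) C Dpo L" by (rule monotone)
          show "{L} \<inter> (E - {L}) = {}" by blast
          show "{L} \<union> (E - {L}) \<subseteq> B" using Tsub[OF E] L Bp_sub by blast
          have "{L} \<union> (E - {L}) = E" using L by blast
          then show "Dpo (flipA B ({L} \<union> (E - {L}))) \<omega>" using d by simp
        qed
        then have "F {L} = 1" using FX wr by blast
        then show ?thesis using True by simp
      next
        case False
        then have "F E = 0" unfolding F_def by (simp add: indicator_def)
        then show ?thesis unfolding F_def by (simp add: indicator_def)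
      qed
    qed
  qed
  have wr: "Wr \<omega> = w" and D0: "Dpo (flipA B {}) \<omega>" using res FX by auto
  have Z: "\<And>Bt. Bt \<subseteq> B \<Longrightarrow> Bt \<noteq> {} \<Longrightarrow> \<not> Dpo (flipA B Bt) \<omega>"
  proof
    fix Bt assume Bt: "Bt \<subseteq> B" "Bt \<noteq> {}" and d: "Dpo (flipA B Bt) \<omega>"
    have finS: "finite (Bt - B')" using finB Bt(1) finite_subset by blast
    show False
    proof (cases "Bt \<inter> B' = {}")
      case False
      have "Dpo (flipA B (Bt \<inter> B')) \<omega>"
      proof (rule flipA_mono[OF B_in om finS])
        show "Bt - B' \<subseteq> Bplus" using Bt B_split by blast
        show "\<And>L. L \<in> Bplus \<Longrightarrow> pos_monotonic (space M) C Dpo L" by (rule monotone)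
        show "Bt \<inter> B' \<inter> (Bt - B') = {}" by blast
        show "Bt \<inter> B' \<union> (Bt - B') \<subseteq> B" using Bt by blast
        have "Bt \<inter> B' \<union> (Bt - B') = Bt" by blast
        then show "Dpo (flipA B (Bt \<inter> B' \<union> (Bt - B'))) \<omega>" using d by simp
      qed
      moreover have "F (Bt \<inter> B') = 0" using res False by blast
      ultimately show False using FX[of "Bt \<inter> B'"] wr by simp
    next
      case True
      then obtain L where L: "L \<in> Bt" using Bt(2) by blast
      have LP: "L \<in> Bplus" using L True Bt B_split by blast
      have finS': "finite (Bt - {L})" using finB Bt(1) finite_subset by blast
      have "Dpo (flipA B {L}) \<omega>"
      proof (rule flipA_mono[OF B_in om finS'])
        show "Bt - {L} \<subseteq> Bplus" using Bt B_split True by blast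
        show "\<And>L. L \<in> Bplus \<Longrightarrow> pos_monotonic (space M) C Dpo L" by (rule monotone)
        show "{L} \<inter> (Bt - {L}) = {}" by blast
        show "{L} \<union> (Bt - {L}) \<subseteq> B" using Bt L by blast
        have "{L} \<union> (Bt - {L}) = Bt" using L by blast
        then show "Dpo (flipA B ({L} \<union> (Bt - {L}))) \<omega>" using d by simp
      qed
      moreover have "F {L} = 0" using res LP by blast
      ultimately show False using FX[of "{L}"] wr by simp
    qed
  qed
  have suff: "sufficient_cause C Dpo B \<omega>"
    unfolding sufficient_cause_def
  proof (intro conjI)
    show "B \<in> dotP C" by (rule B_in)
    show "\<exists>c\<in>assignments C. conj_val B c"
      using flipA_assign[OF B_in, of "{}"] flipA_lit[OF B_in, of _ "{}"]
      unfolding conj_val_def by blast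
    show "\<forall>c\<in>assignments C. conj_val B c \<longrightarrow> Dpo c \<omega>"
      using assign_unique[OF B_in finC B_card] D0 by blast
  qed
  have minB: "\<And>B''. B'' \<subset> B \<Longrightarrow> \<not> sufficient_cause C Dpo B'' \<omega>"
  proof
    fix B'' assume sub: "B'' \<subset> B" and sc: "sufficient_cause C Dpo B'' \<omega>"
    obtain L where L: "L \<in> B" "L \<notin> B''" using sub by blast
    have cA: "flipA B {L} \<in> assignments C" using flipA_assign[OF B_in] L by blast
    have "conj_val B'' (flipA B {L})"
      unfolding conj_val_def
    proof
      fix L' assume "L' \<in> B''"
      then have "L' \<in> B" "L' \<notin> {L}" using sub L by auto
      then show "lit_val L' (flipA B {L})" using flipA_lit[OF B_in] by blast
    qed
    then have "Dpo (flipA B {L}) \<omega>" using sc cA unfolding sufficient_cause_def by blast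
    then show False using Z[of "{L}"] L by blast
  qed
  have msc: "minimal_sufficient_cause C Dpo B \<omega>"
    unfolding minimal_sufficient_cause_def using suff minB by blast
  have "singular_cause_for C Dpo B \<omega>"
    unfolding singular_cause_for_def
  proof (intro conjI ballI impI)
    show "minimal_sufficient_cause C Dpo B \<omega>" by (rule msc)
    fix B3 assume B3: "B3 \<in> dotP C" and ne: "B3 \<noteq> B"
    show "\<not> minimal_sufficient_cause C Dpo B3 \<omega>"
    proof
      assume m3: "minimal_sufficient_cause C Dpo B3 \<omega>"
      then have sc3: "sufficient_cause C Dpo B3 \<omega>" unfolding minimal_sufficient_cause_def by blast
      define Bt where "Bt = {L\<in>B. (fst L, \<not> snd L) \<in> B3}"
      have BtB: "Bt \<subseteq> B" unfolding Bt_def by blast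
      have cv: "conj_val B3 (flipA B Bt)" unfolding Bt_def by (rule other_cause(1)[OF B_in finC B_card B3])
      have "Dpo (flipA B Bt) \<omega>" using sc3 cv flipA_assign[OF B_in BtB] unfolding sufficient_cause_def by blast
      then have "Bt = {}" using Z[OF BtB] by blast
      then have "B3 \<subseteq> B" unfolding Bt_def by (rule other_cause(2)[OF B_in finC B_card B3])
      then have "B3 \<subset> B" using ne by blast
      then show False using minB sc3 by blast
    qed
  qed
  then show ?thesis unfolding singular_cause_def using om by blast
qed

end
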